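(* Let $d\ge 1$ and let $\varphi(x)$ be an $\mathcal L_d$-formula in the single free variable $x$ which is a finite conjunction of literals, each of the form $[t(x):p]$ or $\neg[t(x):p]$ with $p\in\mathbb H_d$ and $t(x)$ a term obtained from $x$ by applying finitely many function symbols $u_U$, $\pi_q$. If $\mathcal H_d\models\exists x\,\varphi(x)$, then $\mathcal V_d\models\exists x\,\varphi(x)$.
   Context: Notation. For $d\ge 1$, $\mathbb H_d$ is the set of complex linear subspaces of $\mathbb C^d$, ordered by inclusion $\le$, with $\top=\mathbb C^d$, $\bot=\{0\}$, $p^\bot$ the orthogonal complement, $p\wedge q=p\cap q$ and $p\vee q=p+q$. $\mathbb V_d\subseteq\mathbb H_d$ is the set of one-dimensional subspaces (rays). $\mathbb U_d$ is the set of unitary operators on $\mathbb C^d$, and for $U\in\mathbb U_d$, $p\in\mathbb H_d$, $U(p)=\{Uv: v\in p\}$. The Sasaki projection is $p\,\&\,q := q\cap(q^\bot+p)$; equivalently $p\,\&\,q=\{\Pi_q v: v\in p\}$ where $\Pi_q$ is the orthogonal projector onto $q$. Language $\mathcal L_d$: a first-order language without equality and without constants, having a unary function symbol $u_U$ for each $U\in\mathbb U_d$, a unary function symbol $\pi_q$ for each $q\in\mathbb H_d$, and a unary relation symbol $[\,\cdot:p]$ for each $p\in\mathbb H_d$. Hilbert model $\mathcal H_d$: the $\mathcal L_d$-structure with domain $\mathbb H_d$, $u_U^{\mathcal H_d}(x)=U(x)$, $\pi_q^{\mathcal H_d}(x)=x\,\&\,q$, and $[x:p]^{\mathcal H_d}$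 holds iff $x\le p$. Vector model $\mathcal V_d$: the $\mathcal L_d$-structure with domain $\mathbb V_d\cup\{\bot\}$ and the same formulas: $u_U^{\mathcal V_d}(x)=U(x)$, $\pi_q^{\mathcal V_d}(x)=x\,\&\,q$, $[x:p]^{\mathcal V_d}$ iff $x\le p$. *)

theory Defs
  imports "HOL-Analysis.Analysis"
begin

text \<open>C^d is modelled as complex^'n for a finite index type 'n, d = CARD('n) \<ge> 1.\<close>

definition cinner :: "complex^'n::finite \<Rightarrow> complex^'n \<Rightarrow> complex" where
  "cinner x y = (\<Sum>i\<in>UNIV. cnj (x $ i) * y $ i)"

definition csubspace :: "(complex^'n::finite) set \<Rightarrow> bool" where
  "csubspace S \<longleftrightarrow> 0 \<in> S \<and> (\<forall>x\<in>S. \<forall>y\<in>S. x + y \<in> S) \<and> (\<forall>c. \<forall>x\<in>S. c *s x \<in> S)"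

definition ray :: "(complex^'n::finite) set \<Rightarrow> bool" where
  "ray S \<longleftrightarrow> (\<exists>v. v \<noteq> 0 \<and> S = {c *s v | c. True})"

definition bot_sp :: "(complex^'n::finite) set" where
  "bot_sp = {0}"

definition ortho :: "(complex^'n::finite) set \<Rightarrow> (complex^'n) set" where
  "ortho p = {v. \<forall>w\<in>p. cinner w v = 0}"

definition join :: "(complex^'n::finite) set \<Rightarrow> (complex^'n) set \<Rightarrow> (complex^'n) set" where
  "join p q = {a + b | a b. a \<in> p \<and> b \<in> q}"

definition sasaki :: "(complex^'n::finite) set \<Rightarrow> (complex^'n) set \<Rightarrow> (complex^'n) set" where
  "sasaki p q = q \<inter> join (ortho q) p"

definition cadj :: "complex^'n^'n \<Rightarrow> complex^'n^'n::finite" where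
  "cadj U = (\<chi> i j. cnj (U $ j $ i))"

definition unitary :: "complex^'n^'n::finite \<Rightarrow> bool" where
  "unitary U \<longleftrightarrow> U ** cadj U = mat 1 \<and> cadj U ** U = mat 1"

definition uapp :: "complex^'n^'n::finite \<Rightarrow> (complex^'n) set \<Rightarrow> (complex^'n) set" where
  "uapp U p = (\<lambda>v. U *v v) ` p"

datatype ('n::finite) qterm = TVar | TU "complex^'n^'n" "'n qterm" | TPi "(complex^'n) set" "'n qterm"

fun wf_term :: "('n::finite) qterm \<Rightarrow> bool" where
  "wf_term TVar = True"
| "wf_term (TU U t) = (unitary U \<and> wf_term t)"
| "wf_term (TPi q t) = (csubspace q \<and> wf_term t)"

text \<open>Interpretation of terms (identical in H_d and V_d).\<close>
fun teval :: "('n::finite) qterm \<Rightarrow> (complex^'n) set \<Rightarrow> (complex^'n) set" where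
  "teval TVar x = x"
| "teval (TU U t) x = uapp U (teval t x)"
| "teval (TPi q t) x = sasaki (teval t x) q"

text \<open>A literal (b, t, p): [t(x):p] if b, \<not>[t(x):p] otherwise. A formula is a
  finite conjunction of literals, given as a list.\<close>
type_synonym 'n literal = "bool \<times> 'n qterm \<times> (complex^'n) set"

definition wf_formula :: "('n::finite) literal list \<Rightarrow> bool" where
  "wf_formula phi \<longleftrightarrow> (\<forall>(b, t, p)\<in>set phi. wf_term t \<and> csubspace p)"

definition holds :: "('n::finite) literal list \<Rightarrow> (complex^'n) set \<Rightarrow> bool" where
  "holds phi x \<longleftrightarrow> (\<forall>(b, t, p)\<in>set phi. (teval t x \<subseteq> p) = b)"

definition H_sat_ex :: "('n::finite) literal list \<Rightarrow> bool" where
  "H_sat_ex phi \<longleftrightarrow> (\<exists>x. csubspace x \<and> holds phi x)"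

definition V_sat_ex :: "('n::finite) literal list \<Rightarrow> bool" where
  "V_sat_ex phi \<longleftrightarrow> (\<exists>x. (ray x \<or> x = bot_sp) \<and> holds phi x)"

end

theory Submission
  imports Defs
begin

lemma scaleR_vec_eq: "(r::real) *\<^sub>R (x::complex^'n::finite) = complex_of_real r *s x"
  unfolding vec_eq_iff vector_scaleR_component vector_smult_component by (simp add: scaleR_conv_of_real)

lemma csub_subspace: "csubspace q \<Longrightarrow> subspace q"
  unfolding csubspace_def subspace_def by (simp add: scaleR_vec_eq)

lemma inner_cinner: "inner (w::complex^'n::finite) z = Re (cinner w z)"
  unfolding inner_vec_def cinner_def inner_complex_def
  by (simp add: Re_sum)

lemma cinner_smult_left: "cinner (c *s w) z = cnj c * cinner w z"
  unfolding cinner_def by (simp add: sum_distrib_left mult.assoc)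

lemma cinner_smult_right: "cinner w (c *s z) = c * cinner w z"
  unfolding cinner_def by (simp add: sum_distrib_left algebra_simps)

lemma cinner_add_right: "cinner w (a + b) = cinner w a + cinner w b"
  unfolding cinner_def by (simp add: sum.distrib algebra_simps)

lemma cinner_self0: "cinner (w::complex^'n::finite) w = 0 \<Longrightarrow> w = 0"
proof -
  assume "cinner w w = 0"
  then have "inner w w = 0" by (simp add: inner_cinner)
  then show ?thesis by simp
qed

lemma decomp_exists:
  assumes q: "csubspace (q::(complex^'n::finite) set)"
  shows "\<exists>y. y \<in> q \<and> v - y \<in> ortho q"
proof -
  have sp: "span q = q" using csub_subspace[OF q] by (simp add: span_eq_iff)
  obtain y z where y: "y \<in> span q" and z: "\<And>w. w \<in> span q \<Longrightarrow> orthogonal z w" and v: "v = y + z"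
    using orthogonal_subspace_decomp_exists[of q v] by blast
  have "z \<in> ortho q"
    unfolding ortho_def
  proof safe
    fix w assume w: "w \<in> q"
    have "\<i> *s w \<in> q" using q w unfolding csubspace_def by blast
    have "inner w z = 0" using z[of w] w sp
      by (metis orthogonal_def inner_commute)
    then have r1: "Re (cinner w z) = 0" by (simp add: inner_cinner)
    have "inner (\<i> *s w) z = 0" using z[of "\<i> *s w"] \<open>\<i> *s w \<in> q\<close> sp
      by (metis orthogonal_def inner_commute)
    then have r2: "Re (cinner (\<i> *s w) z) = 0" by (simp add: inner_cinner)
    then have "Im (cinner w z) = 0" by (simp add: cinner_smult_left)
    with r1 show "cinner w z = 0" by (simp add: complex_eq_iff)
  qed
  then show ?thesis using y sp v by (intro exI[of _ y]) simp
qed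

lemma csub_add: "csubspace q \<Longrightarrow> a \<in> q \<Longrightarrow> b \<in> q \<Longrightarrow> a + b \<in> q"
  unfolding csubspace_def by blast

lemma csub_smult: "csubspace q \<Longrightarrow> a \<in> q \<Longrightarrow> c *s a \<in> q"
  unfolding csubspace_def by blast

lemma csub_zero: "csubspace q \<Longrightarrow> 0 \<in> q"
  unfolding csubspace_def by blast

lemma neg_smult: "- (a::complex^'n::finite) = (-1) *s a"
  by (rule vector_sneg_minus1)

lemma csub_neg: "csubspace q \<Longrightarrow> a \<in> q \<Longrightarrow> - a \<in> q"
  using csub_smult[of q a "-1"] neg_smult[of a] by metis

lemma csub_diff: "csubspace q \<Longrightarrow> a \<in> q \<Longrightarrow> b \<in> q \<Longrightarrow> a - b \<in> q"
  using csub_add[of q a "-b"] csub_neg[of q b] by (metis diff_conv_add_uminus)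

lemma ortho_csub: "csubspace (ortho q)"
  unfolding csubspace_def ortho_def
  by (simp add: cinner_add_right cinner_smult_right, simp add: cinner_def)

lemma proj_ex: "csubspace q \<Longrightarrow> \<exists>y. y \<in> q \<and> v - y \<in> ortho q"
  by (rule decomp_exists)

definition proj :: "(complex^'n::finite) set \<Rightarrow> complex^'n \<Rightarrow> complex^'n" where
  "proj q v = (SOME y. y \<in> q \<and> v - y \<in> ortho q)"

lemma proj_prop: "csubspace q \<Longrightarrow> proj q v \<in> q \<and> v - proj q v \<in> ortho q"
  unfolding proj_def using someI_ex[OF proj_ex] by blast

lemma ortho_inter: "a \<in> q \<Longrightarrow> a \<in> ortho q \<Longrightarrow> a = 0"
  unfolding ortho_def using cinner_self0 by blast

lemma proj_unique:
  assumes q: "csubspace q" and y: "y \<in> q" "v - y \<in> ortho q"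
  shows "proj q v = y"
proof -
  have p: "proj q v \<in> q" "v - proj q v \<in> ortho q" using proj_prop[OF q] by auto
  have "proj q v - y \<in> q" using csub_diff[OF q p(1) y(1)] .
  moreover have "(v - y) - (v - proj q v) \<in> ortho q"
    using csub_diff[OF ortho_csub y(2) p(2)] .
  moreover have "(v - y) - (v - proj q v) = proj q v - y" by simp
  ultimately have "proj q v - y = 0" using ortho_inter by metis
  then show ?thesis by simp
qed

lemma sasaki_proj:
  assumes q: "csubspace q"
  shows "sasaki p q = proj q ` p"
proof
  show "sasaki p q \<subseteq> proj q ` p"
  proof
    fix w assume "w \<in> sasaki p q"
    then obtain a b where w: "w \<in> q" "a \<in> ortho q" "b \<in> p" "w = a + b"
      unfolding sasaki_def join_def by blast
    have "b - w = - a" using w(4) by simp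
    then have "b - w \<in> ortho q" using csub_neg[OF ortho_csub w(2)] by simp
    then have "proj q b = w" using proj_unique[OF q w(1)] by blast
    then show "w \<in> proj q ` p" using w(3) by blast
  qed
next
  show "proj q ` p \<subseteq> sasaki p q"
  proof
    fix w assume "w \<in> proj q ` p"
    then obtain b where b: "b \<in> p" "w = proj q b" by blast
    have pp: "w \<in> q" "b - w \<in> ortho q" using proj_prop[OF q, of b] b by auto
    have "w - b \<in> ortho q" using csub_neg[OF ortho_csub pp(2)] by simp
    moreover have "w = (w - b) + b" by simp
    ultimately show "w \<in> sasaki p q" unfolding sasaki_def join_def using pp(1) b(1) by blast
  qed
qed

lemma proj_add: assumes q: "csubspace q" shows "proj q (a + b) = proj q a + proj q b"
proof (rule proj_unique[OF q])
  show "proj q a + proj q b \<in> q" using proj_prop[OF q] csub_add[OF q] by blast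
  have "(a - proj q a) + (b - proj q b) \<in> ortho q" using proj_prop[OF q] csub_add[OF ortho_csub] by blast
  moreover have "(a - proj q a) + (b - proj q b) = a + b - (proj q a + proj q b)" by simp
  ultimately show "a + b - (proj q a + proj q b) \<in> ortho q" by simp
qed

lemma proj_smult: assumes q: "csubspace q" shows "proj q (c *s a) = c *s proj q a"
proof (rule proj_unique[OF q])
  show "c *s proj q a \<in> q" using proj_prop[OF q] csub_smult[OF q] by blast
  have "c *s (a - proj q a) \<in> ortho q" using proj_prop[OF q] csub_smult[OF ortho_csub] by blast
  then show "c *s a - c *s proj q a \<in> ortho q" by (simp add: vector_ssub_ldistrib)
qed

lemma mv_smult: "(U::complex^'n^'n::finite) *v (c *s a) = c *s (U *v a)"
  unfolding vec_eq_iff matrix_vector_mult_def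
  by (simp add: sum_distrib_left algebra_simps)

fun fmap :: "('n::finite) qterm \<Rightarrow> complex^'n \<Rightarrow> complex^'n" where
  "fmap TVar = (\<lambda>v. v)"
| "fmap (TU U t) = (\<lambda>v. U *v fmap t v)"
| "fmap (TPi q t) = (\<lambda>v. proj q (fmap t v))"

lemma teval_fmap: "wf_term t \<Longrightarrow> teval t S = fmap t ` S"
  by (induction t arbitrary: S) (auto simp: uapp_def sasaki_proj image_image)

lemma fmap_add: "wf_term t \<Longrightarrow> fmap t (a + b) = fmap t a + fmap t b"
  by (induction t) (simp_all add: proj_add matrix_vector_right_distrib)

lemma fmap_smult: "wf_term t \<Longrightarrow> fmap t (c *s a) = c *s fmap t a"
  by (induction t) (simp_all add: proj_smult mv_smult)


lemma subsingleton_finite: "\<forall>a\<in>A. \<forall>b\<in>A. a = b \<Longrightarrow> finite A"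
proof (cases "A = {}")
  case False
  then obtain a where "a \<in> A" by blast
  moreover assume "\<forall>a\<in>A. \<forall>b\<in>A. a = b"
  ultimately have "A = {a}" by blast
  then show ?thesis by simp
qed simp

lemma avoid:
  assumes x: "csubspace (x::(complex^'n::finite) set)"
  shows "(\<forall>S\<in>set Ss. csubspace S \<and> \<not> x \<subseteq> S) \<Longrightarrow> \<exists>v\<in>x. \<forall>S\<in>set Ss. v \<notin> S"
proof (induction Ss)
  case Nil
  then show ?case using csub_zero[OF x] by auto
next
  case (Cons S Ss)
  then obtain v where v: "v \<in> x" "\<forall>T\<in>set Ss. v \<notin> T" by auto
  have S: "csubspace S" "\<not> x \<subseteq> S" using Cons.prems by auto
  show ?case
  proof (cases "v \<in> S")
    case False
    then show ?thesis using v by auto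
  next
    case True
    obtain w where w: "w \<in> x" "w \<notin> S" using S(2) by blast
    define g where "g n = w + of_nat n *s v" for n :: nat
    have gx: "g n \<in> x" for n unfolding g_def using csub_add[OF x w(1) csub_smult[OF x v(1)]] .
    have gS: "g n \<notin> S" for n
    proof
      assume "g n \<in> S"
      then have "g n - of_nat n *s v \<in> S" using csub_diff[OF S(1) _ csub_smult[OF S(1) True]] by blast
      then show False using w(2) unfolding g_def by simp
    qed
    have one: "\<forall>a\<in>{n. g n \<in> T}. \<forall>b\<in>{n. g n \<in> T}. a = b" if T: "T \<in> set Ss" for T
    proof (intro ballI, rule ccontr)
      fix a b assume ab: "a \<in> {n. g n \<in> T}" "b \<in> {n. g n \<in> T}" "a \<noteq> b"
      have cT: "csubspace T" using Cons.prems T by auto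
      have "g a - g b \<in> T" using ab csub_diff[OF cT] by blast
      moreover have "g a - g b = (of_nat a - of_nat b) *s v"
        unfolding g_def vec_eq_iff by (simp add: algebra_simps)
      ultimately have "(of_nat a - of_nat b :: complex) *s v \<in> T" by simp
      then have "inverse (of_nat a - of_nat b :: complex) *s ((of_nat a - of_nat b :: complex) *s v) \<in> T"
        using csub_smult[OF cT] by blast
      moreover have "(of_nat a - of_nat b :: complex) \<noteq> 0" using ab(3) by simp
      then have "inverse (of_nat a - of_nat b :: complex) *s ((of_nat a - of_nat b :: complex) *s v) = v"
        by (simp only: vector_smult_assoc, simp)
      ultimately have "v \<in> T" by simp
      then show False using v(2) T by blast
    qed
    have fin: "finite (\<Union>T\<in>set Ss. {n. g n \<in> T})"
    proof (rule finite_UN_I)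
      show "finite (set Ss)" by simp
      fix T assume "T \<in> set Ss"
      show "finite {n. g n \<in> T}" by (rule subsingleton_finite[OF one[OF \<open>T \<in> set Ss\<close>]])
    qed
    obtain n where n: "n \<notin> (\<Union>T\<in>set Ss. {n. g n \<in> T})"
      using ex_new_if_finite[OF infinite_UNIV_nat fin] by (elim exE)
    show ?thesis using n gx gS by (intro bexI[of _ "g n"]) auto
  qed
qed

lemma fmap_zero: "wf_term t \<Longrightarrow> fmap t 0 = 0"
  using fmap_smult[of t 0 0] by simp

theorem mainTheorem5:
  fixes phi :: "('n::finite) literal list"
  assumes "wf_formula phi"
    and "H_sat_ex phi"
  shows "V_sat_ex phi"
proof -
  obtain x where x: "csubspace x" "holds phi x" using assms(2) unfolding H_sat_ex_def by blast
  have wf: "\<And>b t p. (b, t, p) \<in> set phi \<Longrightarrow> wf_term t \<and> csubspace p"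
    using assms(1) unfolding wf_formula_def by fastforce
  have hx: "\<And>b t p. (b, t, p) \<in> set phi \<Longrightarrow> (teval t x \<subseteq> p) = b"
    using x(2) unfolding holds_def by fastforce
  define Ss where "Ss = map (\<lambda>(b, t, p). {v. fmap t v \<in> p}) (filter (\<lambda>(b, t, p). \<not> b) phi)"
  have "\<forall>S\<in>set Ss. csubspace S \<and> \<not> x \<subseteq> S"
  proof
    fix S assume "S \<in> set Ss"
    then obtain t p where tp: "(False, t, p) \<in> set phi" "S = {v. fmap t v \<in> p}"
      unfolding Ss_def by auto
    have w: "wf_term t" "csubspace p" using wf[OF tp(1)] by auto
    have "csubspace S" unfolding tp(2) csubspace_def
      using w by (simp add: fmap_zero fmap_add fmap_smult csub_zero csub_add csub_smult)
    moreover have "\<not> x \<subseteq> S"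
      using hx[OF tp(1)] teval_fmap[OF w(1)] tp(2) by auto
    ultimately show "csubspace S \<and> \<not> x \<subseteq> S" by blast
  qed
  then obtain v where v: "v \<in> x" "\<forall>S\<in>set Ss. v \<notin> S" using avoid[OF x(1)] by blast
  define X where "X = {c *s v | c. True}"
  have "ray X \<or> X = bot_sp"
  proof (cases "v = 0")
    case True
    then have "X = {0}" unfolding X_def by auto
    then show ?thesis unfolding bot_sp_def by blast
  next
    case False
    then show ?thesis unfolding ray_def X_def by blast
  qed
  moreover have "holds phi X" unfolding holds_def
  proof (intro ballI, clarify)
    fix b t p assume btp: "(b, t, p) \<in> set phi"
    have w: "wf_term t" "csubspace p" using wf[OF btp] by auto
    have TX: "teval t X = {c *s fmap t v | c. True}"
    proof -
      have "fmap t ` {c *s v | c. True} = {fmap t (c *s v) | c. True}" by blast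
      then show ?thesis unfolding teval_fmap[OF w(1)] X_def by (simp add: fmap_smult[OF w(1)])
    qed
    show "(teval t X \<subseteq> p) = b"
    proof (cases b)
      case True
      then have "fmap t v \<in> p" using hx[OF btp] teval_fmap[OF w(1)] v(1) by auto
      then show ?thesis using True TX csub_smult[OF w(2)] by auto
    next
      case False
      then have "(False, t, p) \<in> set (filter (\<lambda>(b, t, p). \<not> b) phi)" using btp by simp
      then have "(\<lambda>(b, t, p). {v. fmap t v \<in> p}) (False, t, p) \<in> set Ss"
        unfolding Ss_def set_map by (rule imageI)
      then have "{v. fmap t v \<in> p} \<in> set Ss" by (simp only: case_prod_conv)
      with v(2) have "v \<notin> {v. fmap t v \<in> p}" by (rule bspec)
      then have "fmap t v \<notin> p" by simp
      moreover have "fmap t v = 1 *s fmap t v" by simp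
      then have "fmap t v \<in> teval t X" unfolding TX by blast
      ultimately show ?thesis using False by blast
    qed
  qed
  ultimately show ?thesis unfolding V_sat_ex_def by blast
qed

end
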